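(* Let $(\mathbf{L},\mathbf{R})\in\mathcal{P}_{\mathsf N}$ be centered (so both matrices have the same number $m$ of columns), and let $f:\{0,1\}^m\to\{0,1\}^m$. Then $f$ is a contraction map for $(\mathbf{L},\mathbf{R})$ if and only if $f$ is an inclusion dominance map for $(\mathbf{L},\mathbf{R})$. In particular, a centered pair admits a contraction map if and only if it admits an inclusion dominance map.
   Context: $\mathcal{P}_{\mathsf N}$ denotes the set of pairs $(\mathbf{L},\mathbf{R})$ of $(0,1)$-matrices, $\mathbf{L}$ of size $(\mathsf N+1)\times m_L$ and $\mathbf{R}$ of size $(\mathsf N+1)\times m_R$, such that some index $p\in[\mathsf N+1]$ has row $p$ of $\mathbf{L}$ and row $p$ of $\mathbf{R}$ both zero. $\mathbf{A}_{(i)}$ denotes the $i$-th row of $\mathbf{A}$; $e$ the all-ones row vector; $|v|=\sum_k|v_k|$; $|x-x'|$ the Hamming distance; for vectors, $v\le w$ means componentwise; $u^T$ is the transpose (column vector). The pair is balanced if $|\mathbf{L}_{(i)}|=|\mathbf{R}_{(i)}|$ for all $i$, and centered if it is balanced and for some $i$ we have $\mathbf{L}_{(i)}=e$ and $\mathbf{R}_{(i)}=e$. A contraction map is $f:\{0,1\}^{m_L}\to\{0,1\}^{m_R}$ with $f(\mathbf{L}_{(i)})=\mathbf{R}_{(i)}$ for all $i\in[\mathsf N+1]$ and $|x-x'|\ge|f(x)-f(x')|$ for all $x,x'$. A dominance map is $f:\{0,1\}^{m_L}\to\{0,1\}^{m_R}$ such that for all $u$, $|u|=|f(u)|$ and $\mathbf{L}u^T\le\mathbf{R}f(u)^T$.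 An inclusion dominance map is a dominance map $f$ such that $u'\le u$ implies $f(u')\le f(u)$. *)

theory Defs
  imports Main
begin

text \<open>Binary vectors in {0,1}^m are bool lists of length m (True = 1).
  A (0,1)-matrix with N+1 rows and m columns is given by its rows
  A :: nat \<Rightarrow> bool list, row i (for i = 0..N) being A i, of length m.\<close>

definition bvec :: "nat \<Rightarrow> bool list set" where
  "bvec m = {x. length x = m}"

definition wt :: "bool list \<Rightarrow> nat" where
  "wt x = length (filter id x)"

definition hdist :: "bool list \<Rightarrow> bool list \<Rightarrow> nat" where
  "hdist x y = length (filter id (map2 (\<noteq>) x y))"

definition ip :: "bool list \<Rightarrow> bool list \<Rightarrow> nat" where
  "ip x y = length (filter id (map2 (\<and>) x y))"

definition vle :: "bool list \<Rightarrow> bool list \<Rightarrow> bool" where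
  "vle x y = list_all2 (\<le>) x y"

definition inP :: "nat \<Rightarrow> nat \<Rightarrow> nat \<Rightarrow> (nat \<Rightarrow> bool list) \<Rightarrow> (nat \<Rightarrow> bool list) \<Rightarrow> bool" where
  "inP N mL mR L R \<longleftrightarrow>
     (\<forall>i\<le>N. length (L i) = mL \<and> length (R i) = mR) \<and>
     (\<exists>p\<le>N. L p = replicate mL False \<and> R p = replicate mR False)"

definition balanced :: "nat \<Rightarrow> (nat \<Rightarrow> bool list) \<Rightarrow> (nat \<Rightarrow> bool list) \<Rightarrow> bool" where
  "balanced N L R \<longleftrightarrow> (\<forall>i\<le>N. wt (L i) = wt (R i))"

definition centered :: "nat \<Rightarrow> nat \<Rightarrow> nat \<Rightarrow> (nat \<Rightarrow> bool list) \<Rightarrow> (nat \<Rightarrow> bool list) \<Rightarrow> bool" where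
  "centered N mL mR L R \<longleftrightarrow> balanced N L R \<and>
     (\<exists>i\<le>N. L i = replicate mL True \<and> R i = replicate mR True)"

definition contraction_map :: "nat \<Rightarrow> nat \<Rightarrow> nat \<Rightarrow> (nat \<Rightarrow> bool list) \<Rightarrow> (nat \<Rightarrow> bool list)
    \<Rightarrow> (bool list \<Rightarrow> bool list) \<Rightarrow> bool" where
  "contraction_map N mL mR L R f \<longleftrightarrow>
     (\<forall>x\<in>bvec mL. f x \<in> bvec mR) \<and>
     (\<forall>i\<le>N. f (L i) = R i) \<and>
     (\<forall>x\<in>bvec mL. \<forall>x'\<in>bvec mL. hdist (f x) (f x') \<le> hdist x x')"

definition dominance_map :: "nat \<Rightarrow> nat \<Rightarrow> nat \<Rightarrow> (nat \<Rightarrow> bool list) \<Rightarrow> (nat \<Rightarrow> bool list)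
    \<Rightarrow> (bool list \<Rightarrow> bool list) \<Rightarrow> bool" where
  "dominance_map N mL mR L R f \<longleftrightarrow>
     (\<forall>u\<in>bvec mL. f u \<in> bvec mR \<and> wt u = wt (f u) \<and>
        (\<forall>i\<le>N. ip (L i) u \<le> ip (R i) (f u)))"

definition inclusion_dominance_map :: "nat \<Rightarrow> nat \<Rightarrow> nat \<Rightarrow> (nat \<Rightarrow> bool list) \<Rightarrow> (nat \<Rightarrow> bool list)
    \<Rightarrow> (bool list \<Rightarrow> bool list) \<Rightarrow> bool" where
  "inclusion_dominance_map N mL mR L R f \<longleftrightarrow>
     dominance_map N mL mR L R f \<and>
     (\<forall>u\<in>bvec mL. \<forall>u'\<in>bvec mL. vle u' u \<longrightarrow> vle (f u') (f u))"

end

theory Submission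
  imports Defs
begin

lemma hd0: "hdist a (replicate (length a) False) = wt a"
  by (induction a) (auto simp: hdist_def wt_def)

lemma hd1: "hdist a (replicate (length a) True) = length a - wt a"
proof (induction a)
  case (Cons x a)
  have "wt a \<le> length a" by (simp add: wt_def)
  then show ?case using Cons by (auto simp: hdist_def wt_def Suc_diff_le)
qed (simp add: hdist_def wt_def)

lemma wt_le: "wt a \<le> length a" by (simp add: wt_def)

lemma hd_ip: "length a = length b \<Longrightarrow> hdist a b + 2 * ip a b = wt a + wt b"
  by (induction a b rule: list_induct2) (auto simp: hdist_def wt_def ip_def)

lemma hd_vle: "length a = length b \<Longrightarrow> wt b \<le> hdist a b + wt a \<and> (vle a b \<longleftrightarrow> hdist a b + wt a = wt b)"
  by (induction a b rule: list_induct2) (auto simp: hdist_def wt_def vle_def)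

lemma ip_eq: "length a = length b \<Longrightarrow> ip a b \<le> wt a \<and> ip a b \<le> wt b \<and> (ip a b = wt a \<and> ip a b = wt b \<longrightarrow> a = b)"
  by (induction a b rule: list_induct2) (auto simp: wt_def ip_def)

lemma meetjoin: "length x = length y \<Longrightarrow>
   vle (map2 (\<and>) x y) x \<and> vle (map2 (\<and>) x y) y \<and> vle x (map2 (\<or>) x y) \<and> vle y (map2 (\<or>) x y)
   \<and> hdist x y + wt (map2 (\<and>) x y) = wt (map2 (\<or>) x y)"
  by (induction x y rule: list_induct2) (auto simp: hdist_def wt_def vle_def)

lemma sandwich: "length a = length b \<Longrightarrow> length c = length a \<Longrightarrow> length d = length a \<Longrightarrow>
   vle c a \<Longrightarrow> vle c b \<Longrightarrow> vle a d \<Longrightarrow> vle b d \<Longrightarrow> hdist a b + wt c \<le> wt d"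
proof (induction a arbitrary: b c d)
  case Nil then show ?case by (simp add: hdist_def wt_def)
next
  case (Cons x a)
  obtain y b' where b: "b = y # b'" using Cons.prems(1) by (cases b) auto
  obtain z c' where c: "c = z # c'" using Cons.prems(2) by (cases c) auto
  obtain w d' where d: "d = w # d'" using Cons.prems(3) by (cases d) auto
  have IH: "hdist a b' + wt c' \<le> wt d'"
    using Cons.prems by (intro Cons.IH) (auto simp: b c d vle_def)
  have "z \<le> x" "z \<le> y" "x \<le> w" "y \<le> w" using Cons.prems by (auto simp: b c d vle_def)
  then show ?case using IH by (cases x; cases y; cases z; cases w) (auto simp: b c d hdist_def wt_def)
qed

lemma ip_self: "ip a a = wt a" by (induction a) (auto simp: ip_def wt_def)
lemma wt_rep: "wt (replicate n True) = n" "wt (replicate n False) = 0"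
  by (induction n) (auto simp: wt_def)

theorem theorem2:
  fixes N mL mR :: nat and L R :: "nat \<Rightarrow> bool list" and f :: "bool list \<Rightarrow> bool list"
  assumes "inP N mL mR L R" and "centered N mL mR L R"
  shows "(contraction_map N mL mR L R f \<longleftrightarrow> inclusion_dominance_map N mL mR L R f)
       \<and> ((\<exists>g. contraction_map N mL mR L R g) \<longleftrightarrow> (\<exists>g. inclusion_dominance_map N mL mR L R g))"
proof -
  have len: "\<And>i. i \<le> N \<Longrightarrow> length (L i) = mL \<and> length (R i) = mR" using assms(1) by (simp add: inP_def)
  obtain p where p: "p \<le> N" "L p = replicate mL False" "R p = replicate mR False" using assms(1) by (auto simp: inP_def)
  obtain q where q: "q \<le> N" "L q = replicate mL True" "R q = replicate mR True" using assms(2) by (auto simp: centered_def)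
  have bal: "\<And>i. i \<le> N \<Longrightarrow> wt (L i) = wt (R i)" using assms(2) by (simp add: centered_def balanced_def)
  have mm: "mR = mL" using bal[OF q(1)] q by (simp add: wt_rep)
  have main: "\<And>g. contraction_map N mL mR L R g \<longleftrightarrow> inclusion_dominance_map N mL mR L R g"
  proof
    fix g assume C: "contraction_map N mL mR L R g"
    have gb: "\<And>x. x \<in> bvec mL \<Longrightarrow> g x \<in> bvec mL" using C mm by (auto simp: contraction_map_def)
    have gL: "\<And>i. i \<le> N \<Longrightarrow> g (L i) = R i" using C by (auto simp: contraction_map_def)
    have gc: "\<And>x x'. x \<in> bvec mL \<Longrightarrow> x' \<in> bvec mL \<Longrightarrow> hdist (g x) (g x') \<le> hdist x x'"
      using C by (auto simp: contraction_map_def)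
    have Lb: "\<And>i. i \<le> N \<Longrightarrow> L i \<in> bvec mL" using len by (simp add: bvec_def)
    have wtg: "wt (g u) = wt u" if u: "u \<in> bvec mL" for u
    proof -
      have l: "length u = mL" "length (g u) = mL" using u gb[OF u] by (auto simp: bvec_def)
      have "hdist (g u) (g (L p)) \<le> hdist u (L p)" using gc[OF u Lb[OF p(1)]] .
      then have 1: "wt (g u) \<le> wt u" using gL[OF p(1)] p mm l hd0[of u] hd0[of "g u"] by simp
      have "hdist (g u) (g (L q)) \<le> hdist u (L q)" using gc[OF u Lb[OF q(1)]] .
      then have "mL - wt (g u) \<le> mL - wt u" using gL[OF q(1)] q mm l hd1[of u] hd1[of "g u"] by simp
      then have "wt u \<le> wt (g u)" using wt_le[of u] wt_le[of "g u"] l by linarith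
      with 1 show ?thesis by simp
    qed
    show "inclusion_dominance_map N mL mR L R g"
      unfolding inclusion_dominance_map_def dominance_map_def
    proof (intro conjI ballI allI impI)
      fix u assume u: "u \<in> bvec mL"
      show "g u \<in> bvec mR" using gb[OF u] mm by simp
      show "wt u = wt (g u)" using wtg[OF u] by simp
      fix i assume i: "i \<le> N"
      have l: "length u = mL" "length (g u) = mL" using u gb[OF u] by (auto simp: bvec_def)
      have "hdist (R i) (g u) \<le> hdist (L i) u" using gc[OF Lb[OF i] u] gL[OF i] by simp
      moreover have "hdist (R i) (g u) + 2 * ip (R i) (g u) = wt (R i) + wt (g u)"
        using hd_ip[of "R i" "g u"] len[OF i] l mm by simp
      moreover have "hdist (L i) u + 2 * ip (L i) u = wt (L i) + wt u"
        using hd_ip[of "L i" u] len[OF i] l by simp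
      ultimately show "ip (L i) u \<le> ip (R i) (g u)" using bal[OF i] wtg[OF u] by linarith
    next
      fix u u' assume u: "u \<in> bvec mL" and u': "u' \<in> bvec mL" and v: "vle u' u"
      have l: "length u = mL" "length (g u) = mL" "length u' = mL" "length (g u') = mL"
        using u gb[OF u] u' gb[OF u'] by (auto simp: bvec_def)
      have "hdist u' u + wt u' = wt u" using hd_vle[of u' u] v l by simp
      moreover have "hdist (g u') (g u) \<le> hdist u' u" using gc[OF u' u] .
      moreover have "wt (g u) \<le> hdist (g u') (g u) + wt (g u')" using hd_vle[of "g u'" "g u"] l by simp
      ultimately have "hdist (g u') (g u) + wt (g u') = wt (g u)" using wtg[OF u] wtg[OF u'] by linarith
      then show "vle (g u') (g u)" using hd_vle[of "g u'" "g u"] l by simp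
    qed
  next
    fix g assume D: "inclusion_dominance_map N mL mR L R g"
    have gb: "\<And>x. x \<in> bvec mL \<Longrightarrow> g x \<in> bvec mL" using D mm by (auto simp: inclusion_dominance_map_def dominance_map_def)
    have wtg: "\<And>x. x \<in> bvec mL \<Longrightarrow> wt (g x) = wt x" using D by (auto simp: inclusion_dominance_map_def dominance_map_def)
    have ipg: "\<And>x i. x \<in> bvec mL \<Longrightarrow> i \<le> N \<Longrightarrow> ip (L i) x \<le> ip (R i) (g x)"
      using D by (auto simp: inclusion_dominance_map_def dominance_map_def)
    have mon: "\<And>u u'. u \<in> bvec mL \<Longrightarrow> u' \<in> bvec mL \<Longrightarrow> vle u' u \<Longrightarrow> vle (g u') (g u)"
      using D by (auto simp: inclusion_dominance_map_def)
    have Lb: "\<And>i. i \<le> N \<Longrightarrow> L i \<in> bvec mL" using len by (simp add: bvec_def)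
    show "contraction_map N mL mR L R g"
      unfolding contraction_map_def
    proof (intro conjI ballI allI impI)
      fix x assume "x \<in> bvec mL" then show "g x \<in> bvec mR" using gb mm by simp
    next
      fix i assume i: "i \<le> N"
      have l: "length (g (L i)) = mL" "length (R i) = mL" using gb[OF Lb[OF i]] len[OF i] mm by (auto simp: bvec_def)
      have "wt (L i) \<le> ip (R i) (g (L i))" using ipg[OF Lb[OF i] i] ip_self[of "L i"] by simp
      moreover have "ip (R i) (g (L i)) \<le> wt (R i)" using ip_eq[of "R i" "g (L i)"] l by simp
      moreover have "wt (g (L i)) = wt (R i)" using wtg[OF Lb[OF i]] bal[OF i] by simp
      ultimately show "g (L i) = R i" using ip_eq[of "R i" "g (L i)"] l bal[OF i] by simp
    next
      fix x x' assume x: "x \<in> bvec mL" and x': "x' \<in> bvec mL"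
      define z where "z = map2 (\<and>) x x'"
      define w where "w = map2 (\<or>) x x'"
      have l: "length x = mL" "length x' = mL" using x x' by (auto simp: bvec_def)
      have zb: "z \<in> bvec mL" and wb: "w \<in> bvec mL" using l by (auto simp: z_def w_def bvec_def)
      have MJ: "vle z x" "vle z x'" "vle x w" "vle x' w" "hdist x x' + wt z = wt w"
        using meetjoin[of x x'] l by (auto simp: z_def w_def)
      have "hdist (g x) (g x') + wt (g z) \<le> wt (g w)"
        apply (rule sandwich)
        using gb[OF x] gb[OF x'] gb[OF zb] gb[OF wb] mon[OF x zb MJ(1)] mon[OF x' zb MJ(2)]
          mon[OF wb x MJ(3)] mon[OF wb x' MJ(4)] by (auto simp: bvec_def)
      then show "hdist (g x) (g x') \<le> hdist x x'" using wtg[OF zb] wtg[OF wb] MJ(5) by linarith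
    qed
  qed
  show ?thesis using main by blast
qed

end
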